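(* A graph $G$ admits a proper straight-line drawing with spanning ratio equal to $1$ if and only if $G$ is a point visibility graph.
   Context: A drawing of a graph maps each vertex to a distinct point of the plane and each edge to a Jordan arc between its end-vertices; it is straight-line if every edge is drawn as the straight-line segment between its end-vertices. A straight-line drawing is proper if no two vertices coincide and no edge contains a vertex other than its end-vertices. In a straight-line drawing $\Gamma$, the length of a path is the sum of the Euclidean lengths of its edges, $\pi_\Gamma(u,v)$ is the minimum length of a path between $u$ and $v$, and $\|uv\|_\Gamma$ is the Euclidean distance between $u$ and $v$. The spanning ratio of $\Gamma$ is $\max_{u\neq v}\pi_\Gamma(u,v)/\|uv\|_\Gamma$. A graph $G$ is a point visibility graph if there is a finite point set $P\subset\mathbb R^2$ such that $G$ has one vertex per point of $P$ and two vertices are adjacent if and only if the open straight-line segment between the corresponding points contains no point of $P$. *)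

theory Defs
  imports "HOL-Analysis.Analysis" "HOL-Library.Extended_Real"
begin

definition graph :: "'a set \<Rightarrow> ('a \<Rightarrow> 'a \<Rightarrow> bool) \<Rightarrow> bool" where
  "graph V E \<longleftrightarrow> finite V \<and>
     (\<forall>u v. E u v \<longrightarrow> u \<in> V \<and> v \<in> V \<and> u \<noteq> v \<and> E v u)"

text \<open>A straight-line drawing is determined by the placement p of the vertices
  (edges are the segments between their end-points); vertices go to distinct points.\<close>
definition straight_line_drawing ::
  "'a set \<Rightarrow> ('a \<Rightarrow> 'a \<Rightarrow> bool) \<Rightarrow> ('a \<Rightarrow> real^2) \<Rightarrow> bool" where
  "straight_line_drawing V E p \<longleftrightarrow> inj_on p V"

definition proper_drawing ::
  "'a set \<Rightarrow> ('a \<Rightarrow> 'a \<Rightarrow> bool) \<Rightarrow> ('a \<Rightarrow> real^2) \<Rightarrow> bool" where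
  "proper_drawing V E p \<longleftrightarrow> straight_line_drawing V E p \<and>
     (\<forall>u v w. E u v \<longrightarrow> w \<in> V \<longrightarrow> w \<noteq> u \<longrightarrow> w \<noteq> v \<longrightarrow>
        p w \<notin> closed_segment (p u) (p v))"

definition is_path :: "('a \<Rightarrow> 'a \<Rightarrow> bool) \<Rightarrow> 'a list \<Rightarrow> 'a \<Rightarrow> 'a \<Rightarrow> bool" where
  "is_path E xs u v \<longleftrightarrow> xs \<noteq> [] \<and> hd xs = u \<and> last xs = v \<and> distinct xs \<and>
     (\<forall>i. Suc i < length xs \<longrightarrow> E (xs ! i) (xs ! Suc i))"

definition path_length :: "('a \<Rightarrow> real^2) \<Rightarrow> 'a list \<Rightarrow> real" where
  "path_length p xs = (\<Sum>i<length xs - 1. dist (p (xs ! i)) (p (xs ! Suc i)))"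

text \<open>Shortest-path length (infinite if no path exists).\<close>
definition path_dist ::
  "('a \<Rightarrow> 'a \<Rightarrow> bool) \<Rightarrow> ('a \<Rightarrow> real^2) \<Rightarrow> 'a \<Rightarrow> 'a \<Rightarrow> ereal" where
  "path_dist E p u v = Inf {ereal (path_length p xs) | xs. is_path E xs u v}"

text \<open>Convention: with fewer than two vertices the ratio is 1 (the value 1 is a lower
  bound of every ratio, so it does not affect the maximum otherwise).\<close>
definition spanning_ratio ::
  "'a set \<Rightarrow> ('a \<Rightarrow> 'a \<Rightarrow> bool) \<Rightarrow> ('a \<Rightarrow> real^2) \<Rightarrow> ereal" where
  "spanning_ratio V E p = Sup (insert 1
     {path_dist E p u v / ereal (dist (p u) (p v)) | u v. u \<in> V \<and> v \<in> V \<and> u \<noteq> v})"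

definition point_visibility_graph :: "'a set \<Rightarrow> ('a \<Rightarrow> 'a \<Rightarrow> bool) \<Rightarrow> bool" where
  "point_visibility_graph V E \<longleftrightarrow>
     (\<exists>(P :: (real^2) set) f. finite P \<and> bij_betw f V P \<and>
        (\<forall>u\<in>V. \<forall>v\<in>V. u \<noteq> v \<longrightarrow> (E u v \<longleftrightarrow> open_segment (f u) (f v) \<inter> P = {})))"

end

theory Submission imports Defs begin

lemma pl_cons: "xs \<noteq> [] \<Longrightarrow> path_length p (x # xs) = dist (p x) (p (hd xs)) + path_length p xs"
  by (cases xs) (simp_all add: path_length_def sum.lessThan_Suc_shift del: sum.lessThan_Suc)

lemma pl_tri: "xs \<noteq> [] \<Longrightarrow> dist (p (hd xs)) (p (last xs)) \<le> path_length p xs"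
proof (induction xs)
  case Nil then show ?case by simp
next
  case (Cons x xs)
  show ?case
  proof (cases "xs = []")
    case True then show ?thesis by (simp add: path_length_def)
  next
    case False
    then show ?thesis using Cons.IH pl_cons[OF False, of p x]
      dist_triangle[of "p x" "p (last xs)" "p (hd xs)"] by simp
  qed
qed

lemma seg_tri: "(x::'a::euclidean_space) \<in> closed_segment a b \<longleftrightarrow> dist a b = dist a x + dist x b"
  using between between_mem_segment by metis

lemma G1:
  fixes a b c q :: "'a::euclidean_space"
  assumes "b \<in> open_segment a c" "q \<in> open_segment a b"
  shows "q \<in> open_segment a c \<and> dist a q < dist a b"
proof -
  have b: "dist a c = dist a b + dist b c" "b \<noteq> a" "b \<noteq> c"
    using assms(1) seg_tri unfolding open_segment_def by auto
  have q: "dist a b = dist a q + dist q b" "q \<noteq> a" "q \<noteq> b"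
    using assms(2) seg_tri unfolding open_segment_def by auto
  have "dist q c \<le> dist q b + dist b c" by (rule dist_triangle)
  moreover have "dist a c \<le> dist a q + dist q c" by (rule dist_triangle)
  ultimately have "dist a c = dist a q + dist q c" using b q by linarith
  then have "q \<in> closed_segment a c" using seg_tri by blast
  moreover have "q \<noteq> c"
  proof
    assume "q = c"
    then have "dist b c = 0" using b q by (simp add: dist_commute)
    then show False using b by simp
  qed
  moreover have "dist q b > 0" using q by simp
  ultimately show ?thesis using q unfolding open_segment_def by auto
qed

lemma G2:
  fixes a b c :: "'a::euclidean_space"
  assumes "b \<in> open_segment a c"
  shows "a \<notin> closed_segment b c" "closed_segment b c \<subseteq> closed_segment a c"
proof -
  have b: "dist a c = dist a b + dist b c" "b \<noteq> a" "b \<noteq> c"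
    using assms(1) seg_tri unfolding open_segment_def by auto
  show "a \<notin> closed_segment b c"
  proof
    assume "a \<in> closed_segment b c"
    then have "dist b c = dist b a + dist a c" using seg_tri by blast
    then have "dist a b = 0" using b by (simp add: dist_commute)
    then show False using b by simp
  qed
  show "closed_segment b c \<subseteq> closed_segment a c"
  proof
    fix x assume "x \<in> closed_segment b c"
    then have x: "dist b c = dist b x + dist x c" using seg_tri by blast
    have "dist a x \<le> dist a b + dist b x" by (rule dist_triangle)
    moreover have "dist a c \<le> dist a x + dist x c" by (rule dist_triangle)
    ultimately have "dist a c = dist a x + dist x c" using b x by linarith
    then show "x \<in> closed_segment a c" using seg_tri by blast
  qed
qed

lemma path_two: "E u v \<Longrightarrow> u \<noteq> v \<Longrightarrow> is_path E [u, v] u v"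
  unfolding is_path_def by (auto simp: less_Suc_eq)

lemma path_cons: "is_path E xs w v \<Longrightarrow> E u w \<Longrightarrow> u \<notin> set xs \<Longrightarrow> is_path E (u # xs) u v"
  unfolding is_path_def
proof (intro conjI allI impI; (elim conjE)?)
  fix i assume *: "xs \<noteq> []" "hd xs = w" "\<forall>i. Suc i < length xs \<longrightarrow> E (xs ! i) (xs ! Suc i)"
    "E u w" "Suc i < length (u # xs)"
  show "E ((u # xs) ! i) ((u # xs) ! Suc i)"
    using * by (cases i) (auto simp: hd_conv_nth)
qed auto

lemma path_in_V:
  assumes "graph V E" "is_path E xs u v" "u \<in> V"
  shows "set xs \<subseteq> V"
proof
  fix x assume "x \<in> set xs"
  then obtain i where i: "i < length xs" "x = xs ! i" by (auto simp: in_set_conv_nth)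
  show "x \<in> V"
  proof (cases i)
    case 0 then show ?thesis using assms i by (cases xs) (auto simp: is_path_def)
  next
    case (Suc j)
    then have "E (xs ! j) (xs ! i)" using assms(2) i unfolding is_path_def by auto
    then show ?thesis using assms(1) i unfolding graph_def by blast
  qed
qed


lemma vis_path:
  fixes f :: "'a \<Rightarrow> real^2"
  assumes fin: "finite V" and inj: "inj_on f V"
    and vis: "\<forall>u\<in>V. \<forall>v\<in>V. u \<noteq> v \<longrightarrow> (E u v \<longleftrightarrow> open_segment (f u) (f v) \<inter> f ` V = {})"
  shows "\<forall>u v. u \<in> V \<longrightarrow> v \<in> V \<longrightarrow> u \<noteq> v \<longrightarrow> card (f ` V \<inter> closed_segment (f u) (f v)) = n \<longrightarrow>
     (\<exists>xs. is_path E xs u v \<and> path_length f xs = dist (f u) (f v) \<and> f ` set xs \<subseteq> closed_segment (f u) (f v))"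
proof (induction n rule: less_induct)
  case (less n)
  show ?case
  proof (intro allI impI)
    fix u v assume u: "u \<in> V" and v: "v \<in> V" and uv: "u \<noteq> v"
      and n: "card (f ` V \<inter> closed_segment (f u) (f v)) = n"
    show "\<exists>xs. is_path E xs u v \<and> path_length f xs = dist (f u) (f v) \<and> f ` set xs \<subseteq> closed_segment (f u) (f v)"
    proof (cases "open_segment (f u) (f v) \<inter> f ` V = {}")
      case True
      then have "E u v" using vis[rule_format, OF u v uv] by simp
      then show ?thesis using path_two[of E u v] uv
        by (intro exI[of _ "[u, v]"]) (simp add: path_length_def)
    next
      case False
      define S where "S = {w \<in> V. f w \<in> open_segment (f u) (f v)}"
      have Sfin: "finite S" "S \<noteq> {}" using fin False unfolding S_def by auto
      define m where "m = Min ((\<lambda>w. dist (f u) (f w)) ` S)"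
      have "m \<in> (\<lambda>w. dist (f u) (f w)) ` S" unfolding m_def using Sfin by (intro Min_in) auto
      then obtain w where wS: "w \<in> S" and wm: "dist (f u) (f w) = m" by auto
      have mle: "\<And>z. z \<in> S \<Longrightarrow> m \<le> dist (f u) (f z)" unfolding m_def using Sfin by auto
      have w: "w \<in> V" "f w \<in> open_segment (f u) (f v)" using wS S_def by auto
      then have "f w \<noteq> f u" "f w \<noteq> f v" by (auto simp: open_segment_def)
      then have wu: "w \<noteq> u" and wv: "w \<noteq> v" by auto
      have "open_segment (f u) (f w) \<inter> f ` V = {}"
      proof (rule ccontr)
        assume "open_segment (f u) (f w) \<inter> f ` V \<noteq> {}"
        then obtain z where z: "z \<in> V" "f z \<in> open_segment (f u) (f w)" by auto
        from G1[OF w(2) z(2)] have "z \<in> S" "dist (f u) (f z) < m" using z wm S_def by auto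
        then show False using mle by force
      qed
      then have Euw: "E u w" using vis[rule_format, OF u w(1) wu[symmetric]] by simp
      have sub: "closed_segment (f w) (f v) \<subseteq> closed_segment (f u) (f v)"
        and nu: "f u \<notin> closed_segment (f w) (f v)" using G2[OF w(2)] by auto
      have "f ` V \<inter> closed_segment (f w) (f v) \<subset> f ` V \<inter> closed_segment (f u) (f v)"
        using sub nu u by auto
      then have "card (f ` V \<inter> closed_segment (f w) (f v)) < n"
        using n fin psubset_card_mono[of "f ` V \<inter> closed_segment (f u) (f v)"] by blast
      then obtain xs where xs: "is_path E xs w v" "path_length f xs = dist (f w) (f v)"
        "f ` set xs \<subseteq> closed_segment (f w) (f v)"
        using less.IH w(1) v wv by blast
      have uxs: "u \<notin> set xs" using xs(3) nu by auto
      have xne: "xs \<noteq> []" "hd xs = w" using xs(1) unfolding is_path_def by auto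
      have "dist (f u) (f v) = dist (f u) (f w) + dist (f w) (f v)"
        using w(2) seg_tri unfolding open_segment_def by auto
      then have "path_length f (u # xs) = dist (f u) (f v)"
        using pl_cons[OF xne(1), of f u] xne xs(2) by simp
      moreover have "is_path E (u # xs) u v" using path_cons[OF xs(1) Euw uxs] .
      moreover have "f ` set (u # xs) \<subseteq> closed_segment (f u) (f v)" using xs(3) sub by auto
      ultimately show ?thesis by blast
    qed
  qed
qed

theorem lemma2:
  assumes "graph V E"
  shows "(\<exists>p. proper_drawing V E p \<and> spanning_ratio V E p = 1) \<longleftrightarrow>
         point_visibility_graph V E"
proof
  assume "\<exists>p. proper_drawing V E p \<and> spanning_ratio V E p = 1"
  then obtain p where pr: "proper_drawing V E p" and sr: "spanning_ratio V E p = 1" by blast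
  have inj: "inj_on p V" using pr unfolding proper_drawing_def straight_line_drawing_def by blast
  have fin: "finite V" using assms unfolding graph_def by blast
  have "E u v \<longleftrightarrow> open_segment (p u) (p v) \<inter> p ` V = {}" if u: "u \<in> V" and v: "v \<in> V" and uv: "u \<noteq> v" for u v
  proof
    assume Euv: "E u v"
    show "open_segment (p u) (p v) \<inter> p ` V = {}"
    proof (rule ccontr)
      assume "open_segment (p u) (p v) \<inter> p ` V \<noteq> {}"
      then obtain z where z: "z \<in> V" "p z \<in> open_segment (p u) (p v)" by auto
      then have "z \<noteq> u" "z \<noteq> v" by (auto simp: open_segment_def)
      then have "p z \<notin> closed_segment (p u) (p v)" using pr Euv z(1) unfolding proper_drawing_def by blast
      then show False using z(2) by (auto simp: open_segment_def)
    qed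
  next
    assume empty: "open_segment (p u) (p v) \<inter> p ` V = {}"
    show "E u v"
    proof (rule ccontr)
      assume nE: "\<not> E u v"
      define d where "d = dist (p u) (p v)"
      have dpos: "d > 0" using inj u v uv unfolding d_def inj_on_def by auto
      define T where "T = {ereal (path_length p xs) | xs. is_path E xs u v}"
      have "path_dist E p u v / ereal d \<le> spanning_ratio V E p"
        unfolding spanning_ratio_def d_def using u v uv by (intro Sup_upper) blast
      then have rat: "Inf T / ereal d \<le> 1" using sr unfolding path_dist_def T_def by simp
      have "T \<subseteq> (\<lambda>xs. ereal (path_length p xs)) ` {xs. set xs \<subseteq> V \<and> distinct xs}"
        unfolding T_def using path_in_V[OF assms _ u] by (auto simp: is_path_def)
      then have Tfin: "finite T" using finite_subset_distinct[OF fin] finite_subset by blast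
      show False
      proof (cases "T = {}")
        case True
        then show False using rat dpos by (simp add: top_ereal_def)
      next
        case False
        have "Inf T \<in> T" using cInf_eq_Min[OF Tfin False] Min_in[OF Tfin False] by simp
        then obtain xs where xs: "is_path E xs u v" "Inf T = ereal (path_length p xs)"
          unfolding T_def by auto
        have le: "path_length p xs \<le> d" using rat dpos xs(2) by simp
        have xp: "xs \<noteq> []" "hd xs = u" "last xs = v" "distinct xs"
          "\<And>i. Suc i < length xs \<Longrightarrow> E (xs ! i) (xs ! Suc i)" using xs(1) unfolding is_path_def by auto
        obtain ys where ys: "xs = u # ys" using xp by (cases xs) auto
        have "ys \<noteq> []" using ys xp uv by auto
        then obtain w zs where zs: "ys = w # zs" by (cases ys) auto
        have Euw: "E u w" using xp(5)[of 0] ys zs by simp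
        have "zs \<noteq> []"
        proof
          assume "zs = []"
          then have "w = v" using xp ys zs by simp
          then show False using Euw nE by simp
        qed
        have wV: "w \<in> V" using Euw assms unfolding graph_def by blast
        have "v \<in> set zs" using xp(3) ys zs \<open>zs \<noteq> []\<close> last_in_set by fastforce
        then have wv: "w \<noteq> v" and wu: "w \<noteq> u" using xp(4) ys zs by auto
        have "path_length p xs = dist (p u) (p w) + path_length p (w # zs)"
          using pl_cons[of "w # zs" p u] ys zs by simp
        moreover have "dist (p w) (p v) \<le> path_length p (w # zs)"
          using pl_tri[of "w # zs" p] xp(3) ys zs by simp
        ultimately have "dist (p u) (p w) + dist (p w) (p v) \<le> d" using le by simp
        moreover have "d \<le> dist (p u) (p w) + dist (p w) (p v)" unfolding d_def by (rule dist_triangle)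
        ultimately have "p w \<in> closed_segment (p u) (p v)" using seg_tri[THEN iffD2] d_def by force
        moreover have "p w \<noteq> p u" "p w \<noteq> p v" using inj wV u v wu wv unfolding inj_on_def by auto
        ultimately have "p w \<in> open_segment (p u) (p v) \<inter> p ` V" using wV by (auto simp: open_segment_def)
        then show False using empty by blast
      qed
    qed
  qed
  then show "point_visibility_graph V E"
    unfolding point_visibility_graph_def using fin inj
    by (intro exI[of _ "p ` V"] exI[of _ p]) (auto simp: inj_on_imp_bij_betw)
next
  assume "point_visibility_graph V E"
  then obtain P and f :: "'a \<Rightarrow> real^2" where fP: "finite P" "bij_betw f V P"
    and vis0: "\<forall>u\<in>V. \<forall>v\<in>V. u \<noteq> v \<longrightarrow> (E u v \<longleftrightarrow> open_segment (f u) (f v) \<inter> P = {})"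
    unfolding point_visibility_graph_def by blast
  have inj: "inj_on f V" and PV: "P = f ` V" using fP(2) by (auto simp: bij_betw_def)
  have vis: "\<forall>u\<in>V. \<forall>v\<in>V. u \<noteq> v \<longrightarrow> (E u v \<longleftrightarrow> open_segment (f u) (f v) \<inter> f ` V = {})"
    using vis0 PV by simp
  have fin: "finite V" using assms unfolding graph_def by blast
  have proper: "proper_drawing V E f"
    unfolding proper_drawing_def straight_line_drawing_def
  proof (intro conjI inj allI impI)
    fix u v w assume Euv: "E u v" and w: "w \<in> V" "w \<noteq> u" "w \<noteq> v"
    have uv: "u \<in> V" "v \<in> V" "u \<noteq> v" using Euv assms unfolding graph_def by auto
    have "open_segment (f u) (f v) \<inter> f ` V = {}" using vis[rule_format, OF uv] Euv by simp
    moreover have "f w \<noteq> f u" "f w \<noteq> f v" using inj w uv unfolding inj_on_def by auto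
    ultimately show "f w \<notin> closed_segment (f u) (f v)" using w(1) by (auto simp: open_segment_def)
  qed
  have one: "path_dist E f u v / ereal (dist (f u) (f v)) = 1"
    if u: "u \<in> V" and v: "v \<in> V" and uv: "u \<noteq> v" for u v
  proof -
    define d where "d = dist (f u) (f v)"
    have dpos: "d > 0" using inj u v uv unfolding d_def inj_on_def by auto
    obtain xs where xs: "is_path E xs u v" "path_length f xs = d"
      using vis_path[OF fin inj vis] u v uv unfolding d_def by blast
    have "path_dist E f u v = ereal d"
      unfolding path_dist_def
    proof (rule antisym)
      show "Inf {ereal (path_length f xs) |xs. is_path E xs u v} \<le> ereal d"
        using xs by (intro Inf_lower) auto
      show "ereal d \<le> Inf {ereal (path_length f xs) |xs. is_path E xs u v}"
      proof (rule Inf_greatest)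
        fix x assume "x \<in> {ereal (path_length f xs) |xs. is_path E xs u v}"
        then obtain ys where "is_path E ys u v" "x = ereal (path_length f ys)" by auto
        then show "ereal d \<le> x" using pl_tri[of ys f] unfolding is_path_def d_def by auto
      qed
    qed
    then show ?thesis using dpos unfolding d_def by simp
  qed
  have ins: "insert 1 {path_dist E f u v / ereal (dist (f u) (f v)) | u v. u \<in> V \<and> v \<in> V \<and> u \<noteq> v} = {1}"
    using one by auto
  have "spanning_ratio V E f = 1" unfolding spanning_ratio_def ins by simp
  then show "\<exists>p. proper_drawing V E p \<and> spanning_ratio V E p = 1" using proper by blast
qed

end
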